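(* Let $(\mathbb{X},d)$ be a complete metric space, let $F=(\mathbb{X};f_1,\dots,f_N)$ be an invertible iterated function system, and let $A$ be a point-fibred attractor of $F$ with basin $B$ and fast basin $\widehat{B}=\bigcup_{k\ge0}(F^* )^k(A)$. Then $F^*(\widehat{B})=\widehat{B}$, and $\widehat{B}$ is the smallest subset of $\mathbb{X}$ that contains $A$ and is invariant under $F^*$, i.e. $\widehat{B}=\bigcap\{D\subseteq\mathbb{X}: F^*(D)=D,\ A\subseteq D\}$. Moreover: \begin{enumerate} \item if $A^o\neq\emptyset$, then $B\subseteq\widehat{B}$; \item if $A^o=\emptyset$, then $\widehat{B}^o=\emptyset$. \end{enumerate}
   Context: $S^o$ denotes the interior of $S$. An IFS $F=(\mathbb{X};f_1,\dots,f_N)$ consists of continuous maps $f_i:\mathbb{X}\to\mathbb{X}$; it is invertible if each $f_i$ is a homeomorphism, and then $F^*=(\mathbb{X};f_1^{-1},\dots,f_N^{-1})$ with $F^*(X)=\bigcup_i f_i^{-1}(X)$ and $(F^* )^k$ its $k$-fold iterate, $(F^* )^0(X)=X$. Similarly $F(X)=\bigcup_i f_i(X)$. A nonempty compact $A$ is an attractor of $F$ if $F(A)=A$ and there is an open $U\supset A$ with $F^k(S)\to A$ in the Hausdorff metric for every nonempty compact $S\subset U$; the basin $B$ is the union of all such open $U$. For $\omega\in[N]^\infty$ ($[N]=\{1,\dots,N\}$) let $f_{\omega|k}=f_{\omega_1}\circ\cdots\circ f_{\omega_k}$. $A$ is point-fibred if for every $\omega\in[N]^\infty$ and every nonempty compact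 $C\subset B$ the sequence $f_{\omega|k}(C)$ converges in the Hausdorff metric to a singleton independent of $C$. *)

theory Defs
  imports "HOL-Analysis.Analysis"
begin

text \<open>Hausdorff distance between two (nonempty, bounded) subsets of a metric space.
  Only ever applied to nonempty compact sets below.\<close>
definition hausdist :: "'a::metric_space set \<Rightarrow> 'a set \<Rightarrow> real" where
  "hausdist S T = max (SUP x\<in>S. infdist x T) (SUP y\<in>T. infdist y S)"

definition ifs_op :: "nat \<Rightarrow> (nat \<Rightarrow> 'a \<Rightarrow> 'a) \<Rightarrow> 'a set \<Rightarrow> 'a set" where
  "ifs_op N f X = (\<Union>i\<in>{1..N}. f i ` X)"

definition ifs_inv_op :: "nat \<Rightarrow> (nat \<Rightarrow> 'a \<Rightarrow> 'a) \<Rightarrow> 'a set \<Rightarrow> 'a set" where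
  "ifs_inv_op N f X = (\<Union>i\<in>{1..N}. f i -` X)"

definition ifs :: "nat \<Rightarrow> (nat \<Rightarrow> 'a::topological_space \<Rightarrow> 'a) \<Rightarrow> bool" where
  "ifs N f \<longleftrightarrow> (\<forall>i\<in>{1..N}. continuous_on UNIV (f i))"

definition invertible_ifs :: "nat \<Rightarrow> (nat \<Rightarrow> 'a::topological_space \<Rightarrow> 'a) \<Rightarrow> bool" where
  "invertible_ifs N f \<longleftrightarrow> (\<forall>i\<in>{1..N}. \<exists>g. homeomorphism UNIV UNIV (f i) g)"

definition attracting_nbhd :: "nat \<Rightarrow> (nat \<Rightarrow> 'a::metric_space \<Rightarrow> 'a) \<Rightarrow> 'a set \<Rightarrow> 'a set \<Rightarrow> bool" where
  "attracting_nbhd N f A U \<longleftrightarrow> open U \<and> A \<subseteq> U \<and>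
     (\<forall>S. S \<noteq> {} \<and> compact S \<and> S \<subseteq> U \<longrightarrow>
        (\<lambda>k. hausdist ((ifs_op N f ^^ k) S) A) \<longlonglongrightarrow> 0)"

definition is_attractor :: "nat \<Rightarrow> (nat \<Rightarrow> 'a::metric_space \<Rightarrow> 'a) \<Rightarrow> 'a set \<Rightarrow> bool" where
  "is_attractor N f A \<longleftrightarrow> A \<noteq> {} \<and> compact A \<and> ifs_op N f A = A \<and>
     (\<exists>U. attracting_nbhd N f A U)"

definition basin :: "nat \<Rightarrow> (nat \<Rightarrow> 'a::metric_space \<Rightarrow> 'a) \<Rightarrow> 'a set \<Rightarrow> 'a set" where
  "basin N f A = \<Union>{U. attracting_nbhd N f A U}"

text \<open>word_comp f w k = f (w 0) o f (w 1) o ... o f (w (k-1))  (i.e. f_{omega|k}).\<close>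
fun word_comp :: "(nat \<Rightarrow> 'a \<Rightarrow> 'a) \<Rightarrow> (nat \<Rightarrow> nat) \<Rightarrow> nat \<Rightarrow> 'a \<Rightarrow> 'a" where
  "word_comp f w 0 = id"
| "word_comp f w (Suc k) = word_comp f w k \<circ> f (w k)"

definition point_fibred :: "nat \<Rightarrow> (nat \<Rightarrow> 'a::metric_space \<Rightarrow> 'a) \<Rightarrow> 'a set \<Rightarrow> bool" where
  "point_fibred N f A \<longleftrightarrow>
     (\<forall>w. (\<forall>k. w k \<in> {1..N}) \<longrightarrow>
        (\<exists>x. \<forall>C. C \<noteq> {} \<and> compact C \<and> C \<subseteq> basin N f A \<longrightarrow>
           (\<lambda>k. hausdist (word_comp f w k ` C) {x}) \<longlonglongrightarrow> 0))"

definition fast_basin :: "nat \<Rightarrow> (nat \<Rightarrow> 'a \<Rightarrow> 'a) \<Rightarrow> 'a set \<Rightarrow> 'a set" where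
  "fast_basin N f A = (\<Union>k. (ifs_inv_op N f ^^ k) A)"

end

theory Submission
  imports Defs
begin

lemma inv_op_mono: "X \<subseteq> Y \<Longrightarrow> ifs_inv_op N f X \<subseteq> ifs_inv_op N f Y"
  unfolding ifs_inv_op_def by blast

lemma inv_op_UN: "ifs_inv_op N f (\<Union>k. S k) = (\<Union>k. ifs_inv_op N f (S k))"
  unfolding ifs_inv_op_def by blast

lemma hausdist_point:
  fixes S :: "'a::metric_space set"
  assumes "compact S" "y \<in> S"
  shows "dist y p \<le> hausdist S {p}"
proof -
  have "bounded ((\<lambda>x. dist x p) ` S)"
    using assms(1) by (intro compact_imp_bounded compact_continuous_image continuous_intros)
  then have "bdd_above ((\<lambda>x. dist x p) ` S)" by (rule bounded_imp_bdd_above)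
  then have "dist y p \<le> (SUP x\<in>S. dist x p)" using assms(2) by (rule cSUP_upper2) simp
  then show ?thesis unfolding hausdist_def by simp
qed

lemma word_comp_cont:
  assumes "ifs N f" "\<And>j. w j \<in> {1..N}"
  shows "continuous_on UNIV (word_comp f w k)"
proof (induction k)
  case 0 then show ?case by (simp add: continuous_on_id)
next
  case (Suc k)
  have "continuous_on UNIV (f (w k))" using assms unfolding ifs_def by blast
  moreover have "continuous_on (f (w k) ` UNIV) (word_comp f w k)"
    using Suc continuous_on_subset by blast
  ultimately show ?case using continuous_on_compose by simp
qed

lemma word_comp_vimage:
  assumes "\<And>j. w j \<in> {1..N}"
  shows "word_comp f w k -` A \<subseteq> (ifs_inv_op N f ^^ k) A"
proof (induction k)
  case 0 then show ?case by simp
next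
  case (Suc k)
  have "word_comp f w (Suc k) -` A = f (w k) -` (word_comp f w k -` A)" by auto
  also have "\<dots> \<subseteq> f (w k) -` ((ifs_inv_op N f ^^ k) A)" using Suc by blast
  also have "\<dots> \<subseteq> ifs_inv_op N f ((ifs_inv_op N f ^^ k) A)"
    using assms[of k] unfolding ifs_inv_op_def by blast
  finally show ?case by (metis funpow.simps(2) o_apply)
qed

lemma finite_union_empty_interior:
  fixes S :: "nat \<Rightarrow> 'a::topological_space set"
  assumes "finite I" "\<And>i. i \<in> I \<Longrightarrow> closed (S i) \<and> interior (S i) = {}"
  shows "interior (\<Union>i\<in>I. S i) = {}"
  using assms
proof (induction I rule: finite_induct)
  case empty then show ?case by simp
next
  case (insert x F)
  have "interior (S x \<union> (\<Union>i\<in>F. S i)) = interior (S x)"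
    using insert by (intro interior_closed_Un_empty_interior) auto
  then show ?case using insert by simp
qed

theorem mainTheorem5:
  fixes f :: "nat \<Rightarrow> 'a::complete_space \<Rightarrow> 'a" and N :: nat and A :: "'a set"
  assumes "ifs N f" and "invertible_ifs N f"
    and "is_attractor N f A" and "point_fibred N f A"
  shows "ifs_inv_op N f (fast_basin N f A) = fast_basin N f A
         \<and> fast_basin N f A = \<Inter>{D. ifs_inv_op N f D = D \<and> A \<subseteq> D}
         \<and> (interior A \<noteq> {} \<longrightarrow> basin N f A \<subseteq> fast_basin N f A)
         \<and> (interior A = {} \<longrightarrow> interior (fast_basin N f A) = {})"
proof -
  define G where "G = ifs_inv_op N f"
  define P where "P k = (G ^^ k) A" for k
  have fb: "fast_basin N f A = (\<Union>k. P k)" unfolding fast_basin_def P_def G_def by simp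
  have Ane: "A \<noteq> {}" and Acomp: "compact A" and FA: "ifs_op N f A = A"
    and exU: "\<exists>U. attracting_nbhd N f A U"
    using assms(3) unfolding is_attractor_def by auto
  have cont: "\<And>i. i \<in> {1..N} \<Longrightarrow> continuous_on UNIV (f i)"
    using assms(1) unfolding ifs_def by blast
  have N1: "1 \<le> N"
  proof (rule ccontr)
    assume "\<not> 1 \<le> N"
    then have "ifs_op N f A = {}" unfolding ifs_op_def by auto
    with FA Ane show False by simp
  qed
  have AG: "A \<subseteq> G A"
  proof
    fix a assume "a \<in> A"
    then have "f 1 a \<in> ifs_op N f A" using N1 unfolding ifs_op_def by auto
    then have "f 1 a \<in> A" using FA by simp
    then show "a \<in> G A" using N1 unfolding G_def ifs_inv_op_def by auto
  qed
  have Pinc: "P k \<subseteq> P (Suc k)" for k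
  proof (induction k)
    case 0 then show ?case using AG by (simp add: P_def)
  next
    case (Suc k) then show ?case unfolding P_def G_def by (simp add: inv_op_mono)
  qed
  have part1: "G (\<Union>k. P k) = (\<Union>k. P k)"
  proof -
    have "G (\<Union>k. P k) = (\<Union>k. P (Suc k))" unfolding G_def P_def
      by (simp add: inv_op_UN)
    also have "\<dots> = (\<Union>k. P k)"
    proof
      show "(\<Union>k. P (Suc k)) \<subseteq> (\<Union>k. P k)" by blast
      show "(\<Union>k. P k) \<subseteq> (\<Union>k. P (Suc k))" using Pinc by blast
    qed
    finally show ?thesis .
  qed
  have part2: "(\<Union>k. P k) = \<Inter>{D. G D = D \<and> A \<subseteq> D}"
  proof
    have "P 0 = A" by (simp add: P_def)
    then have "A \<subseteq> (\<Union>k. P k)" by blast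
    then show "\<Inter>{D. G D = D \<and> A \<subseteq> D} \<subseteq> (\<Union>k. P k)" using part1 by blast
    show "(\<Union>k. P k) \<subseteq> \<Inter>{D. G D = D \<and> A \<subseteq> D}"
    proof (intro Inter_greatest UN_least)
      fix D k assume "D \<in> {D. G D = D \<and> A \<subseteq> D}"
      then have D: "G D = D" "A \<subseteq> D" by auto
      show "P k \<subseteq> D"
      proof (induction k)
        case 0 then show ?case using D by (simp add: P_def)
      next
        case (Suc k)
        then have "G (P k) \<subseteq> G D" unfolding G_def by (rule inv_op_mono)
        then show ?case using D by (simp add: P_def)
      qed
    qed
  qed
  have part3: "basin N f A \<subseteq> (\<Union>k. P k)" if intA: "interior A \<noteq> {}"
  proof
    fix x assume xB: "x \<in> basin N f A"
    then obtain U where U: "attracting_nbhd N f A U" "x \<in> U" unfolding basin_def by blast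
    have AB: "A \<subseteq> basin N f A" using exU unfolding basin_def attracting_nbhd_def by blast
    obtain a r where ar: "r > 0" "ball a r \<subseteq> A"
      using intA by (force simp: mem_interior)
    then have aA: "a \<in> A" by auto
    have "\<forall>y\<in>A. \<exists>iz. fst iz \<in> {1..N} \<and> snd iz \<in> A \<and> y = f (fst iz) (snd iz)"
    proof
      fix y assume "y \<in> A"
      then have "y \<in> ifs_op N f A" using FA by simp
      then obtain i z where "i \<in> {1..N}" "z \<in> A" "y = f i z" unfolding ifs_op_def by blast
      then show "\<exists>iz. fst iz \<in> {1..N} \<and> snd iz \<in> A \<and> y = f (fst iz) (snd iz)"
        by (intro exI[of _ "(i,z)"]) simp
    qed
    from bchoice[OF this] obtain c where c: "\<forall>y\<in>A. fst (c y) \<in> {1..N} \<and> snd (c y) \<in> A \<and> y = f (fst (c y)) (snd (c y))"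
      by blast
    define I where "I y = fst (c y)" for y
    define Z where "Z y = snd (c y)" for y
    have IZ: "\<And>y. y \<in> A \<Longrightarrow> I y \<in> {1..N} \<and> Z y \<in> A \<and> y = f (I y) (Z y)"
      using c unfolding I_def Z_def by blast
    define as where "as k = (Z ^^ k) a" for k
    define w where "w k = I (as k)" for k
    have asA: "as k \<in> A" for k
    proof (induction k)
      case 0 then show ?case using aA by (simp add: as_def)
    next
      case (Suc k) then show ?case using IZ[of "as k"] by (simp add: as_def)
    qed
    have w: "w k \<in> {1..N}" for k using IZ[OF asA[of k]] unfolding w_def by blast
    have wa: "word_comp f w k (as k) = a" for k
    proof (induction k)
      case 0 then show ?case by (simp add: as_def)
    next
      case (Suc k)
      have "as (Suc k) = Z (as k)" by (simp add: as_def)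
      then have "f (w k) (as (Suc k)) = as k" using IZ[OF asA[of k]] w_def by simp
      then show ?case using Suc by simp
    qed
    have "(\<forall>k. w k \<in> {1..N}) \<longrightarrow> (\<exists>x. \<forall>C. C \<noteq> {} \<and> compact C \<and> C \<subseteq> basin N f A \<longrightarrow>
           (\<lambda>k. hausdist (word_comp f w k ` C) {x}) \<longlonglongrightarrow> 0)"
      using assms(4) unfolding point_fibred_def by (rule spec)
    then obtain p where p0: "\<forall>C. C \<noteq> {} \<and> compact C \<and> C \<subseteq> basin N f A \<longrightarrow>
           (\<lambda>k. hausdist (word_comp f w k ` C) {p}) \<longlonglongrightarrow> 0"
      using w by blast
    have p: "(\<lambda>k. hausdist (word_comp f w k ` C) {p}) \<longlonglongrightarrow> 0"
      if "C \<noteq> {}" "compact C" "C \<subseteq> basin N f A" for C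
      using p0 that by blast
    have wcont: "continuous_on UNIV (word_comp f w k)" for k
      using word_comp_cont[OF assms(1) w] .
    have cimg: "compact (word_comp f w k ` C)" if "compact C" for C k
      using that wcont by (meson compact_continuous_image continuous_on_subset top_greatest)
    have "(\<lambda>k. hausdist (word_comp f w k ` A) {p}) \<longlonglongrightarrow> 0"
      using p[of A] Ane Acomp AB by blast
    moreover have "dist a p \<le> hausdist (word_comp f w k ` A) {p}" for k
    proof -
      have "a \<in> word_comp f w k ` A" using wa[of k] asA[of k] by (metis image_eqI)
      then show ?thesis by (rule hausdist_point[OF cimg[OF Acomp]])
    qed
    ultimately have "dist a p \<le> 0"
      by (intro LIMSEQ_le_const) auto
    then have ap: "a = p" by simp
    have C: "insert x A \<noteq> {}" "compact (insert x A)" "insert x A \<subseteq> basin N f A"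
      using Acomp AB xB by auto
    have "(\<lambda>k. hausdist (word_comp f w k ` insert x A) {a}) \<longlonglongrightarrow> 0"
      using p[OF C] ap by simp
    then obtain k where k: "norm (hausdist (word_comp f w k ` insert x A) {a} - 0) < r"
      using ar(1) unfolding LIMSEQ_iff by blast
    have "dist (word_comp f w k x) a \<le> hausdist (word_comp f w k ` insert x A) {a}"
      using hausdist_point[OF cimg[OF C(2)], of "word_comp f w k x" k a] by blast
    then have "dist (word_comp f w k x) a < r" using k by simp
    then have "word_comp f w k x \<in> A" using ar by (auto simp: dist_commute)
    then have "x \<in> word_comp f w k -` A" by simp
    then have "x \<in> (ifs_inv_op N f ^^ k) A" using word_comp_vimage[where f=f and k=k and A=A, OF w] by (rule subsetD[rotated])
    then have "x \<in> P k" unfolding P_def G_def .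
    then show "x \<in> (\<Union>k. P k)" by blast
  qed
  have part4: "interior (\<Union>k. P k) = {}" if intA: "interior A = {}"
  proof -
    have PP: "closed (P k) \<and> interior (P k) = {}" for k
    proof (induction k)
      case 0 then show ?case using intA Acomp by (simp add: P_def compact_imp_closed)
    next
      case (Suc k)
      have each: "closed (f i -` P k) \<and> interior (f i -` P k) = {}" if i: "i \<in> {1..N}" for i
      proof
        show "closed (f i -` P k)"
          using Suc cont[OF i] by (metis closed_vimage)
        obtain g where h: "homeomorphism UNIV UNIV (f i) g"
          using assms(2) i unfolding invertible_ifs_def by blast
        show "interior (f i -` P k) = {}"
        proof (rule ccontr)
          assume "interior (f i -` P k) \<noteq> {}"
          then obtain V where V: "open V" "V \<noteq> {}" "V \<subseteq> f i -` P k"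
            by (meson open_interior interior_subset ex_in_conv)
          have "open (f i ` V)"
            using homeomorphism_imp_open_map[OF h, of V] V(1) by simp
          moreover have "f i ` V \<subseteq> P k" using V by blast
          ultimately have "f i ` V \<subseteq> interior (P k)" by (simp add: interior_maximal)
          then show False using Suc V(2) by simp
        qed
      qed
      have "P (Suc k) = (\<Union>i\<in>{1..N}. f i -` P k)"
        by (simp add: P_def G_def ifs_inv_op_def)
      then show ?case using each
        by (auto intro!: finite_union_empty_interior)
    qed
    have "euclidean interior_of \<Union>(range P) = {}"
      by (rule Baire_category_alt) (use PP completely_metrizable_space_euclidean in auto)
    then show ?thesis by simp
  qed
  show ?thesis using part1 part2 part3 part4 fb unfolding G_def by simp
qed

end
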